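(* Let $\mathcal{A}\subset\mathbb{C}^n$ be a centrosymmetric set of atoms whose convex hull is compact and contains a ball of positive radius around the origin. Let $x^\star\in\mathbb{C}^n$, let $w$ be a random vector in $\mathbb{C}^n$ with $\mathbb{E}\|w\|_{\mathcal{A}}^*<\infty$, and suppose there is a function $\delta$ such that $P(\|w\|_{\mathcal{A}}^*\ge\mathbb{E}\|w\|_{\mathcal{A}}^*+t)<\delta(t)$ for all $t>0$. Let $\tau>0$, $y=x^\star+w$, and let $\hat{x}$ be the solution of $$\operatorname*{minimize}_{x\in\mathbb{C}^n}\ \tfrac{1}{2}\|x-y\|_2^2+\tau\|x\|_{\mathcal{A}}.$$ For $\gamma\in[0,1]$ define the cone $$C_\gamma(x^\star,\mathcal{A})=\operatorname{cone}\left(\{z:\|x^\star+z\|_{\mathcal{A}}\le\|x^\star\|_{\mathcal{A}}+\gamma\|z\|_{\mathcal{A}}\}\right)$$ and $$\phi_\gamma(x^\star,\mathcal{A})=\inf\left\{\frac{\|z\|_2}{\|z\|_{\mathcal{A}}}: z\in C_\gamma(x^\star,\mathcal{A})\right\}.$$ Suppose $\phi_\gamma(x^\star,\mathcal{A})>0$ for some $\gamma\in[0,1]$ with $\gamma>\mathbb{E}\|w\|_{\mathcal{A}}^*/\tau$. Then $$\|\hat{x}-x^\star\|_2^2\le\frac{(1+\gamma)^2\tau^2}{\gamma^2\,\phi_\gamma(x^\star,\mathcal{A})^2}$$ with probability at least $1-\delta(\gamma\tau-\mathbb{E}\|w\|_{\mathcal{A}}^* )$.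
   Context: The atomic norm is the gauge $\|x\|_{\mathcal{A}}=\inf\{t>0: x\in t\,\operatorname{conv}(\mathcal{A})\}$. The real inner product on $\mathbb{C}^n$ is $\langle x,z\rangle=\operatorname{Re}(z^*x)$. The dual atomic norm is $\|z\|_{\mathcal{A}}^*=\sup_{a\in\mathcal{A}}\langle z,a\rangle$. $\operatorname{cone}(X)$ denotes the conic hull $\{\lambda x:\lambda\ge0,x\in X\}$; in the infimum defining $\phi_\gamma$, $z$ ranges over nonzero elements. *)

theory Defs
  imports "HOL-Analysis.Analysis" "HOL-Probability.Probability"
begin

text \<open>Vectors in C^n are modelled as complex ^ 'n. The real inner product
  inner x z on this type equals Re (z^* x), and norm is the Euclidean 2-norm.\<close>

definition atomic_norm :: "('a::real_vector) set \<Rightarrow> 'a \<Rightarrow> real" where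
  "atomic_norm A x = Inf {t. t > 0 \<and> x \<in> (\<lambda>v. t *\<^sub>R v) ` (convex hull A)}"

definition dual_atomic_norm :: "('a::real_inner) set \<Rightarrow> 'a \<Rightarrow> real" where
  "dual_atomic_norm A z = (SUP a\<in>A. inner z a)"

definition centrosymmetric :: "('a::real_vector) set \<Rightarrow> bool" where
  "centrosymmetric A \<longleftrightarrow> (\<forall>a\<in>A. - a \<in> A)"

definition conic_hull :: "('a::real_vector) set \<Rightarrow> 'a set" where
  "conic_hull X = {c *\<^sub>R x | c x. c \<ge> 0 \<and> x \<in> X}"

definition descent_cone :: "real \<Rightarrow> ('a::real_vector) \<Rightarrow> 'a set \<Rightarrow> 'a set" where
  "descent_cone \<gamma> xs A =
     conic_hull {z. atomic_norm A (xs + z) \<le> atomic_norm A xs + \<gamma> * atomic_norm A z}"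

definition phi :: "real \<Rightarrow> ('a::real_normed_vector) \<Rightarrow> 'a set \<Rightarrow> real" where
  "phi \<gamma> xs A = Inf {norm z / atomic_norm A z | z. z \<in> descent_cone \<gamma> xs A \<and> z \<noteq> 0}"

end

theory Submission imports Defs begin



definition minimizer :: "'a::real_inner set \<Rightarrow> real \<Rightarrow> 'a \<Rightarrow> 'a \<Rightarrow> bool" where
  "minimizer A \<tau> y p \<longleftrightarrow> (\<forall>x. (1/2) * (norm (p - y))\<^sup>2 + \<tau> * atomic_norm A p
         \<le> (1/2) * (norm (x - y))\<^sup>2 + \<tau> * atomic_norm A x)"

definition prox :: "'a::real_inner set \<Rightarrow> real \<Rightarrow> 'a \<Rightarrow> 'a" where
  "prox A \<tau> y = (SOME p. minimizer A \<tau> y p)"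

lemma eps_lim: fixes a b c :: real
  assumes "\<And>t. 0<t \<Longrightarrow> t<1 \<Longrightarrow> a \<le> b + t*c" "0 \<le> c" shows "a \<le> b"
proof (rule ccontr)
  assume "\<not> a \<le> b"
  define t where "t = min (1/2) ((a-b)/(2*(c+1)))"
  have t: "0<t" "t<1" using \<open>\<not> a \<le> b\<close> assms(2) by (auto simp: t_def)
  have "t*c \<le> (a-b)/(2*(c+1)) * c" using assms(2) t by (intro mult_right_mono) (auto simp: t_def)
  also have "\<dots> = (a-b) * (c/(2*(c+1)))" by simp
  also have "\<dots> < (a-b) * 1"
    using \<open>\<not> a \<le> b\<close> assms(2) by (intro mult_strict_left_mono) (auto simp: field_simps)
  also have "\<dots> = a - b" by simp
  finally show False using assms(1)[OF t] by linarith
qed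

context
  fixes A :: "'a::euclidean_space set" and r :: real
  assumes r: "r > 0" and br: "ball 0 r \<subseteq> convex hull A"
begin

lemma zero_in: "0 \<in> convex hull A" using br r by auto

lemma mem_scaled: "t > 0 \<Longrightarrow> x \<in> (\<lambda>v. t *\<^sub>R v) ` (convex hull A) \<longleftrightarrow> inverse t *\<^sub>R x \<in> convex hull A"
proof
  assume "t > 0" "x \<in> (\<lambda>v. t *\<^sub>R v) ` (convex hull A)"
  then show "inverse t *\<^sub>R x \<in> convex hull A" by auto
next
  assume "t > 0" "inverse t *\<^sub>R x \<in> convex hull A"
  then show "x \<in> (\<lambda>v. t *\<^sub>R v) ` (convex hull A)"
    by (intro image_eqI[where x="inverse t *\<^sub>R x"]) auto
qed

lemma up: assumes "0<t" "t \<le> s" "x \<in> (\<lambda>v. t *\<^sub>R v) ` (convex hull A)"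
  shows "x \<in> (\<lambda>v. s *\<^sub>R v) ` (convex hull A)"
proof -
  have s: "s > 0" using assms by auto
  have v: "inverse t *\<^sub>R x \<in> convex hull A" using assms mem_scaled by blast
  have "(1 - t/s) *\<^sub>R 0 + (t/s) *\<^sub>R (inverse t *\<^sub>R x) \<in> convex hull A"
    by (rule convexD_alt[OF convex_convex_hull zero_in v]) (use assms s in auto)
  moreover have "(1 - t/s) *\<^sub>R 0 + (t/s) *\<^sub>R (inverse t *\<^sub>R x) = inverse s *\<^sub>R x"
    using assms s by (simp add: field_simps)
  ultimately have "inverse s *\<^sub>R x \<in> convex hull A" by metis
  then show ?thesis using mem_scaled[OF s] by blast
qed

lemma big: assumes "t > 0" "norm x < t * r" shows "x \<in> (\<lambda>v. t *\<^sub>R v) ` (convex hull A)"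
proof -
  have "norm (inverse t *\<^sub>R x) < r" using assms by (simp add: field_simps)
  then have "inverse t *\<^sub>R x \<in> convex hull A" using br by auto
  then show ?thesis using mem_scaled[OF assms(1)] by blast
qed

lemma S_ne: "{t. t > 0 \<and> x \<in> (\<lambda>v. t *\<^sub>R v) ` (convex hull A)} \<noteq> {}"
proof -
  have "norm x / r + 1 > 0" using r by (simp add: add_nonneg_pos)
  moreover have "norm x < (norm x / r + 1) * r" using r by (simp add: field_simps)
  ultimately show ?thesis using big by blast
qed

lemma g_nonneg: "atomic_norm A x \<ge> 0"
  unfolding atomic_norm_def using S_ne by (intro cInf_greatest) auto

lemma g_le: "t > 0 \<Longrightarrow> x \<in> (\<lambda>v. t *\<^sub>R v) ` (convex hull A) \<Longrightarrow> atomic_norm A x \<le> t"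
  unfolding atomic_norm_def by (rule cInf_lower) (auto intro: bdd_belowI[where m=0])

lemma g_lt: assumes "atomic_norm A x < t" shows "t > 0" "x \<in> (\<lambda>v. t *\<^sub>R v) ` (convex hull A)"
proof -
  obtain s where "s > 0" "x \<in> (\<lambda>v. s *\<^sub>R v) ` (convex hull A)" "s < t"
    using assms S_ne unfolding atomic_norm_def by (subst (asm) cInf_less_iff) (auto intro: bdd_belowI[where m=0])
  then show "t > 0" "x \<in> (\<lambda>v. t *\<^sub>R v) ` (convex hull A)" using up by auto
qed

lemma g_le_norm: "atomic_norm A x \<le> norm x / r"
proof (rule field_le_epsilon)
  fix e :: real assume e: "e > 0"
  have "norm x / r + e > 0" using r e by (simp add: add_nonneg_pos)
  moreover have "norm x < (norm x / r + e) * r" using r e by (simp add: field_simps)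
  ultimately show "atomic_norm A x \<le> norm x / r + e" using big g_le by blast
qed

lemma g_add: "atomic_norm A (x + y) \<le> atomic_norm A x + atomic_norm A y"
proof (rule field_le_epsilon)
  fix e :: real assume e: "e > 0"
  define t where "t = atomic_norm A x + e/2"
  define s where "s = atomic_norm A y + e/2"
  have t: "t > 0" "x \<in> (\<lambda>v. t *\<^sub>R v) ` (convex hull A)" using g_lt[of x t] e by (auto simp: t_def)
  have s: "s > 0" "y \<in> (\<lambda>v. s *\<^sub>R v) ` (convex hull A)" using g_lt[of y s] e by (auto simp: s_def)
  obtain u where u: "u \<in> convex hull A" "x = t *\<^sub>R u" using t by auto
  obtain v where v: "v \<in> convex hull A" "y = s *\<^sub>R v" using s by auto
  have "(1 - s/(t+s)) *\<^sub>R u + (s/(t+s)) *\<^sub>R v \<in> convex hull A"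
    by (rule convexD_alt[OF convex_convex_hull u(1) v(1)]) (use t s in auto)
  moreover have "(1 - s/(t+s)) *\<^sub>R u + (s/(t+s)) *\<^sub>R v = inverse (t+s) *\<^sub>R (x+y)"
    using t s u v by (simp add: field_simps scaleR_add_right)
  ultimately have "x + y \<in> (\<lambda>v. (t+s) *\<^sub>R v) ` (convex hull A)"
    using mem_scaled[of "t+s"] t s by simp
  then have "atomic_norm A (x+y) \<le> t + s" using g_le t s by simp
  then show "atomic_norm A (x + y) \<le> atomic_norm A x + atomic_norm A y + e"
    by (simp add: t_def s_def)
qed

lemma g_scale: assumes c: "c > 0" shows "atomic_norm A (c *\<^sub>R x) \<le> c * atomic_norm A x"
proof (rule field_le_epsilon)
  fix e :: real assume e: "e > 0"
  define t where "t = atomic_norm A x + e/c"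
  have t: "t > 0" "x \<in> (\<lambda>v. t *\<^sub>R v) ` (convex hull A)" using g_lt[of x t] e c by (auto simp: t_def)
  obtain u where u: "u \<in> convex hull A" "x = t *\<^sub>R u" using t by auto
  have "c *\<^sub>R x \<in> (\<lambda>v. (c*t) *\<^sub>R v) ` (convex hull A)" using u by auto
  then have "atomic_norm A (c *\<^sub>R x) \<le> c * t" using g_le t c by simp
  moreover have "c*t = c*atomic_norm A x + e" using c by (simp add: t_def field_simps)
  ultimately show "atomic_norm A (c *\<^sub>R x) \<le> c * atomic_norm A x + e" by linarith
qed

lemma g_convex: assumes "0 < t" "t < 1"
  shows "atomic_norm A ((1-t) *\<^sub>R p + t *\<^sub>R x) \<le> (1-t) * atomic_norm A p + t * atomic_norm A x"
  using g_add[of "(1-t) *\<^sub>R p" "t *\<^sub>R x"] g_scale[of "1-t" p] g_scale[of t x] assms by simp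

lemma g_neg: assumes "centrosymmetric A" shows "atomic_norm A (- x) \<le> atomic_norm A x"
proof (rule field_le_epsilon)
  fix e :: real assume e: "e > 0"
  define t where "t = atomic_norm A x + e"
  have t: "t > 0" "x \<in> (\<lambda>v. t *\<^sub>R v) ` (convex hull A)" using g_lt[of x t] e by (auto simp: t_def)
  obtain u where u: "u \<in> convex hull A" "x = t *\<^sub>R u" using t by auto
  have "(\<lambda>x. (-1) *\<^sub>R x) ` A = A" using assms unfolding centrosymmetric_def
    by (auto intro!: image_eqI[where x="- _"]) 
  then have "(\<lambda>x. (-1) *\<^sub>R x) ` (convex hull A) = convex hull A"
    using convex_hull_scaling[of "-1" A] by simp
  then have "- u \<in> convex hull A" using u by force
  then have "- x \<in> (\<lambda>v. t *\<^sub>R v) ` (convex hull A)" using u by (intro image_eqI[where x="-u"]) auto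
  then show "atomic_norm A (- x) \<le> atomic_norm A x + e" using g_le t by (simp add: t_def)
qed

lemma g_lip: "dist (atomic_norm A x) (atomic_norm A y) \<le> (1/r) * dist x y"
proof -
  have "atomic_norm A x \<le> atomic_norm A y + atomic_norm A (x - y)" using g_add[of y "x-y"] by simp
  moreover have "atomic_norm A y \<le> atomic_norm A x + atomic_norm A (y - x)" using g_add[of x "y-x"] by simp
  moreover have "atomic_norm A (x - y) \<le> norm (x-y) / r" "atomic_norm A (y - x) \<le> norm (x-y) / r"
    using g_le_norm[of "x-y"] g_le_norm[of "y-x"] by (auto simp: norm_minus_commute)
  ultimately show ?thesis by (simp add: dist_real_def dist_norm abs_le_iff)
qed

lemma g_cont: "continuous_on S (atomic_norm A)"
  by (rule lipschitz_on_continuous_on[of "1/r"], rule lipschitz_onI[OF g_lip]) (use r in auto)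


lemma dual_nonneg: assumes "bounded A" "centrosymmetric A" shows "dual_atomic_norm A w \<ge> 0"
proof -
  obtain B where B: "\<forall>a\<in>A. norm a \<le> B" using assms(1) bounded_iff by blast
  have bdd: "bdd_above ((\<lambda>a. inner w a) ` A)"
  proof (rule bdd_aboveI)
    fix u assume "u \<in> (\<lambda>a. inner w a) ` A"
    then obtain a where a: "a \<in> A" "u = inner w a" by auto
    have "inner w a \<le> norm w * norm a" by (rule norm_cauchy_schwarz)
    also have "\<dots> \<le> norm w * B" using B a by (intro mult_left_mono) auto
    finally show "u \<le> norm w * B" using a by simp
  qed
  have "A \<noteq> {}" using zero_in by auto
  then obtain a where a: "a \<in> A" by auto
  then have "- a \<in> A" using assms(2) unfolding centrosymmetric_def by auto
  have "inner w a \<le> dual_atomic_norm A w" "inner w (-a) \<le> dual_atomic_norm A w"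
    unfolding dual_atomic_norm_def by (rule cSUP_upper[OF a bdd], rule cSUP_upper[OF \<open>-a \<in> A\<close> bdd])
  then show ?thesis by simp
qed

lemma dual_ineq: assumes "bounded A" "centrosymmetric A"
  shows "inner w x \<le> atomic_norm A x * dual_atomic_norm A w"
proof -
  define D where "D = dual_atomic_norm A w"
  have D0: "D \<ge> 0" using dual_nonneg[OF assms] by (simp add: D_def)
  obtain B where B: "\<forall>a\<in>A. norm a \<le> B" using assms(1) bounded_iff by blast
  have bdd: "bdd_above ((\<lambda>a. inner w a) ` A)"
  proof (rule bdd_aboveI)
    fix u assume "u \<in> (\<lambda>a. inner w a) ` A"
    then obtain a where a: "a \<in> A" "u = inner w a" by auto
    have "inner w a \<le> norm w * norm a" by (rule norm_cauchy_schwarz)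
    also have "\<dots> \<le> norm w * B" using B a by (intro mult_left_mono) auto
    finally show "u \<le> norm w * B" using a by simp
  qed
  have "A \<subseteq> {v. inner w v \<le> D}"
    unfolding D_def dual_atomic_norm_def using bdd by (auto intro!: cSUP_upper)
  then have hull: "convex hull A \<subseteq> {v. inner w v \<le> D}"
    by (intro hull_minimal convex_halfspace_le)
  show ?thesis unfolding D_def[symmetric]
  proof (rule field_le_epsilon)
    fix e :: real assume e: "e > 0"
    define t where "t = atomic_norm A x + e/(D+1)"
    have t: "t > 0" "x \<in> (\<lambda>v. t *\<^sub>R v) ` (convex hull A)" using g_lt[of x t] e D0 by (auto simp: t_def)
    obtain u where u: "u \<in> convex hull A" "x = t *\<^sub>R u" using t by auto
    have "inner w x = t * inner w u" using u by simp
    also have "\<dots> \<le> t * D" using hull u t by (intro mult_left_mono) auto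
    also have "\<dots> = atomic_norm A x * D + e * (D/(D+1))" using D0 by (simp add: t_def field_simps)
    also have "\<dots> \<le> atomic_norm A x * D + e * 1" using D0 e by (intro add_left_mono mult_left_mono) auto
    finally show "inner w x \<le> atomic_norm A x * D + e" by simp
  qed
qed

lemma VI: assumes tau: "\<tau> > 0" and m: "minimizer A \<tau> y p"
  shows "inner (y - p) (x - p) \<le> \<tau> * (atomic_norm A x - atomic_norm A p)"
proof (rule eps_lim[where c="(norm (x-p))\<^sup>2/2"])
  fix t :: real assume t: "0 < t" "t < 1"
  define q where "q = (1-t) *\<^sub>R p + t *\<^sub>R x"
  have qy: "q - y = (p - y) + t *\<^sub>R (x - p)" by (simp add: q_def algebra_simps)
  have e1: "(norm (q-y))\<^sup>2 = (norm (p-y))\<^sup>2 + 2*t*inner (p-y) (x-p) + t\<^sup>2*(norm (x-p))\<^sup>2"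
    unfolding qy power2_norm_eq_inner by (simp add: inner_add_left inner_add_right inner_commute power2_eq_square algebra_simps)
  have gq: "\<tau> * atomic_norm A q \<le> \<tau> * ((1-t) * atomic_norm A p + t * atomic_norm A x)"
    using g_convex[OF t] tau by (intro mult_left_mono) (auto simp: q_def)
  have "(1/2) * (norm (p - y))\<^sup>2 + \<tau> * atomic_norm A p \<le> (1/2) * (norm (q - y))\<^sup>2 + \<tau> * atomic_norm A q"
    using m unfolding minimizer_def by blast
  then have "0 \<le> t * (inner (p-y) (x-p) + t * ((norm (x-p))\<^sup>2/2) + \<tau> * (atomic_norm A x - atomic_norm A p))"
    using e1 gq by (simp add: algebra_simps power2_eq_square)
  then have "0 \<le> inner (p-y) (x-p) + t * ((norm (x-p))\<^sup>2/2) + \<tau> * (atomic_norm A x - atomic_norm A p)"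
    using t by (simp add: zero_le_mult_iff)
  moreover have "inner (y - p) (x - p) = - inner (p-y) (x-p)" by (simp add: inner_diff_left)
  ultimately show "inner (y - p) (x - p) \<le> \<tau> * (atomic_norm A x - atomic_norm A p) + t * ((norm (x-p))\<^sup>2/2)"
    by linarith
qed simp

lemma minimizer_lip: assumes tau: "\<tau> > 0" and m1: "minimizer A \<tau> y1 p1" and m2: "minimizer A \<tau> y2 p2"
  shows "norm (p1 - p2) \<le> norm (y1 - y2)"
proof -
  have a: "inner (y1 - p1) (p2 - p1) \<le> \<tau> * (atomic_norm A p2 - atomic_norm A p1)" by (rule VI[OF tau m1])
  have b: "inner (y2 - p2) (p1 - p2) \<le> \<tau> * (atomic_norm A p1 - atomic_norm A p2)" by (rule VI[OF tau m2])
  have "inner (y1 - p1) (p2 - p1) + inner (y2 - p2) (p1 - p2) = (norm (p1-p2))\<^sup>2 - inner (y1 - y2) (p1 - p2)"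
    unfolding power2_norm_eq_inner by (simp add: inner_diff_left inner_diff_right inner_commute algebra_simps)
  with a b have "(norm (p1-p2))\<^sup>2 \<le> inner (y1 - y2) (p1 - p2)" by (simp add: algebra_simps)
  also have "\<dots> \<le> norm (y1 - y2) * norm (p1 - p2)" by (rule norm_cauchy_schwarz)
  finally have "norm (p1-p2) * norm (p1-p2) \<le> norm (y1 - y2) * norm (p1 - p2)" by (simp add: power2_eq_square)
  then show ?thesis by (cases "p1 = p2") auto
qed

lemma minimizer_ex: assumes tau: "\<tau> > 0" shows "\<exists>p. minimizer A \<tau> y p"
proof -
  define f where "f x = (1/2) * (norm (x - y))\<^sup>2 + \<tau> * atomic_norm A x" for x
  define R where "R = 2 * (\<tau> * atomic_norm A y) + 1"
  have gy: "\<tau> * atomic_norm A y \<ge> 0" using tau g_nonneg by simp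
  have cont: "continuous_on (cball y R) f" unfolding f_def
    by (intro continuous_intros g_cont)
  have "cball y R \<noteq> {}" using gy by (simp add: R_def)
  then obtain p where p: "p \<in> cball y R" "\<forall>z\<in>cball y R. f p \<le> f z"
    using continuous_attains_inf[OF compact_cball _ cont] by blast
  have "\<forall>x. f p \<le> f x"
  proof
    fix x show "f p \<le> f x"
    proof (cases "x \<in> cball y R")
      case True then show ?thesis using p by auto
    next
      case False
      then have n: "norm (x - y) > R" by (simp add: dist_norm norm_minus_commute)
      have R0: "R \<ge> 0" using gy by (simp add: R_def)
      have "R\<^sup>2 < (norm (x - y))\<^sup>2" using n R0 by (intro power_strict_mono) auto
      moreover have "R\<^sup>2 = 4*(\<tau> * atomic_norm A y)\<^sup>2 + 4*(\<tau> * atomic_norm A y) + 1"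
        unfolding R_def by (simp add: power2_eq_square algebra_simps)
      moreover have "(\<tau> * atomic_norm A y)\<^sup>2 \<ge> 0" by simp
      moreover have "f p \<le> f y" using p R0 by auto
      moreover have "f y = \<tau> * atomic_norm A y" by (simp add: f_def)
      moreover have "\<tau> * atomic_norm A x \<ge> 0" using tau g_nonneg by simp
      ultimately show ?thesis using gy unfolding f_def by linarith
    qed
  qed
  then show ?thesis unfolding minimizer_def f_def by blast
qed

lemma prox_min: "\<tau> > 0 \<Longrightarrow> minimizer A \<tau> y (prox A \<tau> y)"
  unfolding prox_def using minimizer_ex by (rule someI_ex)

lemma prox_cont: assumes "\<tau> > 0" shows "continuous_on UNIV (prox A \<tau>)"
  by (rule lipschitz_on_continuous_on[of 1], rule lipschitz_onI)
     (use minimizer_lip[OF assms prox_min[OF assms] prox_min[OF assms]] in \<open>auto simp: dist_norm\<close>)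

lemma minimizer_eq_prox: "\<tau> > 0 \<Longrightarrow> minimizer A \<tau> y p \<Longrightarrow> p = prox A \<tau> y"
  using minimizer_lip[of \<tau> y p y "prox A \<tau> y"] prox_min[of \<tau> y] by simp

end


theorem proposition2:
  fixes A :: "(complex ^ 'n::finite) set"
    and xs :: "complex ^ 'n"
    and M :: "'w measure"
    and w xhat :: "'w \<Rightarrow> complex ^ 'n"
    and \<delta> :: "real \<Rightarrow> real"
    and \<tau> \<gamma> :: real
  assumes centro: "centrosymmetric A"
    and cpt: "compact (convex hull A)"
    and ball: "\<exists>r>0. ball 0 r \<subseteq> convex hull A"
    and P: "prob_space M"
    and w_rv: "w \<in> borel_measurable M"
    and w_int: "integrable M (\<lambda>\<omega>. dual_atomic_norm A (w \<omega>))"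
    and tail: "\<And>t. t > 0 \<Longrightarrow>
       measure M {\<omega> \<in> space M. dual_atomic_norm A (w \<omega>)
           \<ge> (\<integral>\<omega>. dual_atomic_norm A (w \<omega>) \<partial>M) + t} < \<delta> t"
    and tau: "\<tau> > 0"
    and xhat: "\<And>\<omega> x. \<omega> \<in> space M \<Longrightarrow>
       (1/2) * (norm (xhat \<omega> - (xs + w \<omega>)))\<^sup>2 + \<tau> * atomic_norm A (xhat \<omega>)
         \<le> (1/2) * (norm (x - (xs + w \<omega>)))\<^sup>2 + \<tau> * atomic_norm A x"
    and gamma: "0 \<le> \<gamma>" "\<gamma> \<le> 1"
    and gamma_gt: "\<gamma> > (\<integral>\<omega>. dual_atomic_norm A (w \<omega>) \<partial>M) / \<tau>"
    and phi_pos: "phi \<gamma> xs A > 0"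
  shows "measure M {\<omega> \<in> space M. (norm (xhat \<omega> - xs))\<^sup>2
            \<le> (1 + \<gamma>)\<^sup>2 * \<tau>\<^sup>2 / (\<gamma>\<^sup>2 * (phi \<gamma> xs A)\<^sup>2)}
         \<ge> 1 - \<delta> (\<gamma> * \<tau> - (\<integral>\<omega>. dual_atomic_norm A (w \<omega>) \<partial>M))"
  proof -
  interpret prob_space M by (rule P)
  obtain r where r: "r > 0" "ball 0 r \<subseteq> convex hull A" using ball by blast
  have "bounded (convex hull A)" by (rule compact_imp_bounded[OF cpt])
  then have bA: "bounded A" by (rule bounded_subset) (rule hull_subset)
  define g where "g = atomic_norm A"
  define D where "D \<omega> = dual_atomic_norm A (w \<omega>)" for \<omega>
  define Ex where "Ex = (\<integral>\<omega>. dual_atomic_norm A (w \<omega>) \<partial>M)"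
  define B where "B = (1 + \<gamma>)\<^sup>2 * \<tau>\<^sup>2 / (\<gamma>\<^sup>2 * (phi \<gamma> xs A)\<^sup>2)"
  have Ex0: "Ex \<ge> 0" unfolding Ex_def by (rule Bochner_Integration.integral_nonneg) (rule dual_nonneg[OF r bA centro])
  have "Ex / \<tau> \<ge> 0" using Ex0 tau by simp
  then have g0: "\<gamma> > 0" using gamma_gt unfolding Ex_def[symmetric] by linarith
  have ph: "phi \<gamma> xs A > 0" by (rule phi_pos)
  have key: "(norm (xhat \<omega> - xs))\<^sup>2 \<le> B" if \<omega>: "\<omega> \<in> space M" and good: "D \<omega> < \<gamma> * \<tau>" for \<omega>
  proof -
    define e where "e = xhat \<omega> - xs"
    have m: "minimizer A \<tau> (xs + w \<omega>) (xhat \<omega>)" using xhat[OF \<omega>] unfolding minimizer_def by blast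
    have vi: "inner ((xs + w \<omega>) - xhat \<omega>) (xs - xhat \<omega>) \<le> \<tau> * (g xs - g (xhat \<omega>))"
      unfolding g_def by (rule VI[OF r tau m])
    have "inner ((xs + w \<omega>) - xhat \<omega>) (xs - xhat \<omega>) = (norm e)\<^sup>2 - inner (w \<omega>) e"
      unfolding e_def power2_norm_eq_inner by (simp add: inner_diff_left inner_diff_right inner_add_left inner_commute algebra_simps)
    moreover have px: "xhat \<omega> = xs + e" by (simp add: e_def)
    ultimately have N: "(norm e)\<^sup>2 \<le> inner (w \<omega>) e + \<tau> * (g xs - g (xs + e))" using vi by simp
    have ge0: "g e \<ge> 0" unfolding g_def by (rule g_nonneg[OF r])
    have "inner (w \<omega>) e \<le> g e * D \<omega>" unfolding g_def D_def by (rule dual_ineq[OF r bA centro])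
    also have "\<dots> \<le> g e * (\<gamma> * \<tau>)" using ge0 good by (intro mult_left_mono) auto
    finally have du: "inner (w \<omega>) e \<le> \<gamma> * \<tau> * g e" by (simp add: algebra_simps)
    have N': "(norm e)\<^sup>2 \<le> inner (w \<omega>) e + \<tau> * g xs - \<tau> * g (xs + e)"
      using N by (simp add: right_diff_distrib)
    have "\<tau> * (g (xs + e) - g xs) \<le> \<tau> * (\<gamma> * g e)"
    proof -
      have h0: "0 \<le> (norm e)\<^sup>2" by simp
      have h1: "\<tau> * (\<gamma> * g e) = \<gamma> * \<tau> * g e" by simp
      have h2: "\<tau> * (g (xs + e) - g xs) = \<tau> * g (xs + e) - \<tau> * g xs" by (simp add: right_diff_distrib)
      show ?thesis using N' du h0 h1 h2 by linarith
    qed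
    then have cone: "g (xs + e) \<le> g xs + \<gamma> * g e" using tau by simp
    have "g xs \<le> g (xs + e) + g (- e)" using g_add[OF r, of "xs + e" "- e"] by (simp add: g_def)
    moreover have "g (- e) \<le> g e" unfolding g_def by (rule g_neg[OF r centro])
    ultimately have "g xs \<le> g (xs + e) + g e" by simp
    then have "\<tau> * g xs \<le> \<tau> * (g (xs + e) + g e)" using tau by (intro mult_left_mono) auto
    then have N2: "(norm e)\<^sup>2 \<le> (1 + \<gamma>) * \<tau> * g e" using N' du by (simp add: algebra_simps)
    show ?thesis
    proof (cases "e = 0")
      case True then show ?thesis by (simp add: e_def[symmetric] B_def)
    next
      case False
      have "e \<in> descent_cone \<gamma> xs A" unfolding descent_cone_def conic_hull_def
        by (intro CollectI exI[where x="1::real"] exI[where x=e]) (use cone in \<open>auto simp: g_def\<close>)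
      then have mem: "norm e / g e \<in> {norm z / atomic_norm A z | z. z \<in> descent_cone \<gamma> xs A \<and> z \<noteq> 0}"
        using False by (auto simp: g_def)
      have "phi \<gamma> xs A \<le> norm e / g e" unfolding phi_def
        by (rule cInf_lower[OF mem]) (auto intro!: bdd_belowI[where m=0] divide_nonneg_nonneg g_nonneg[OF r])
      then have gpos: "g e > 0" using ph ge0 by (cases "g e = 0") auto
      with \<open>phi \<gamma> xs A \<le> norm e / g e\<close> have pg: "phi \<gamma> xs A * g e \<le> norm e" by (simp add: field_simps)
      have ne: "norm e > 0" using False by simp
      have "phi \<gamma> xs A * (norm e)\<^sup>2 \<le> phi \<gamma> xs A * ((1 + \<gamma>) * \<tau> * g e)"
        using N2 ph by (intro mult_left_mono) auto
      also have "\<dots> = (1 + \<gamma>) * \<tau> * (phi \<gamma> xs A * g e)" by simp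
      also have "\<dots> \<le> (1 + \<gamma>) * \<tau> * norm e" using pg g0 tau by (intro mult_left_mono) auto
      finally have "phi \<gamma> xs A * norm e * norm e \<le> (1 + \<gamma>) * \<tau> * norm e" by (simp add: power2_eq_square algebra_simps)
      then have "phi \<gamma> xs A * norm e \<le> (1 + \<gamma>) * \<tau>" using ne by simp
      then have "norm e \<le> (1 + \<gamma>) * \<tau> / phi \<gamma> xs A" using ph by (simp add: field_simps)
      then have "(norm e)\<^sup>2 \<le> ((1 + \<gamma>) * \<tau> / phi \<gamma> xs A)\<^sup>2" using ne by (intro power_mono) auto
      also have "\<dots> = (1 + \<gamma>)\<^sup>2 * \<tau>\<^sup>2 / (phi \<gamma> xs A)\<^sup>2" by (simp add: power_divide power_mult_distrib)
      also have "\<dots> \<le> B" unfolding B_def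
      proof (rule divide_left_mono)
        have "\<gamma>\<^sup>2 \<le> 1" using gamma g0 by (simp add: power_le_one)
        then show "\<gamma>\<^sup>2 * (phi \<gamma> xs A)\<^sup>2 \<le> (phi \<gamma> xs A)\<^sup>2" using ph by (simp add: mult_left_le_one_le)
        show "0 \<le> (1 + \<gamma>)\<^sup>2 * \<tau>\<^sup>2" by simp
        show "0 < (phi \<gamma> xs A)\<^sup>2 * (\<gamma>\<^sup>2 * (phi \<gamma> xs A)\<^sup>2)" using ph g0 by simp
      qed
      finally show ?thesis by (simp add: e_def)
    qed
  qed
  have xm: "xhat \<omega> = prox A \<tau> (xs + w \<omega>)" if "\<omega> \<in> space M" for \<omega>
  proof -
    have "minimizer A \<tau> (xs + w \<omega>) (xhat \<omega>)" unfolding minimizer_def using xhat[OF that] by blast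
    then show ?thesis by (rule minimizer_eq_prox[OF r tau])
  qed
  have pm: "prox A \<tau> \<in> borel_measurable borel"
    by (rule borel_measurable_continuous_onI[OF prox_cont[OF r tau]])
  have xhat_m: "xhat \<in> borel_measurable M"
  proof -
    have "(\<lambda>\<omega>. xs + w \<omega>) \<in> borel_measurable M"
      by (intro borel_measurable_add borel_measurable_const w_rv)
    from measurable_compose[OF this pm]
    have "(\<lambda>\<omega>. prox A \<tau> (xs + w \<omega>)) \<in> borel_measurable M" by simp
    then show ?thesis using xm by (subst measurable_cong) auto
  qed
  have Dm: "D \<in> borel_measurable M" using borel_measurable_integrable[OF w_int] by (simp add: D_def[abs_def])
  define Bad where "Bad = {\<omega> \<in> space M. D \<omega> \<ge> Ex + (\<gamma> * \<tau> - Ex)}"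
  define Ev where "Ev = {\<omega> \<in> space M. (norm (xhat \<omega> - xs))\<^sup>2 \<le> B}"
  note Dm[measurable] xhat_m[measurable]
  have Bad_m: "Bad \<in> sets M" unfolding Bad_def by measurable
  have Ev_m: "Ev \<in> sets M" unfolding Ev_def by measurable
  have tpos: "\<gamma> * \<tau> - Ex > 0" using gamma_gt tau unfolding Ex_def[symmetric] by (simp add: field_simps)
  have mB: "measure M Bad < \<delta> (\<gamma> * \<tau> - Ex)" using tail[OF tpos] unfolding Bad_def D_def Ex_def by simp
  have sub: "space M - Bad \<subseteq> Ev"
  proof
    fix \<omega> assume "\<omega> \<in> space M - Bad"
    then have "\<omega> \<in> space M" "D \<omega> < \<gamma> * \<tau>" unfolding Bad_def by auto
    then show "\<omega> \<in> Ev" unfolding Ev_def using key[of \<omega>] by blast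
  qed
  have "measure M (space M - Bad) = 1 - measure M Bad" by (rule prob_compl[OF Bad_m])
  moreover have "measure M (space M - Bad) \<le> measure M Ev" by (rule finite_measure_mono[OF sub Ev_m])
  ultimately have "measure M Ev \<ge> 1 - \<delta> (\<gamma> * \<tau> - Ex)" using mB by linarith
  then show ?thesis unfolding Ev_def B_def Ex_def by simp
qed

end
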